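(* If $G$ is a graph with girth $g(G)\ge 7$ and no isolated vertices, then $\theta(G^{[\natural 2]})=\chi_{i\mu_2}(G)=\gamma_t(G)$.
   Context: The girth is the length of a shortest cycle (infinite for forests). The exact distance-$2$ graph $G^{[\natural 2]}$ has vertex set $V(G)$, two vertices being adjacent iff their distance in $G$ equals $2$. $\theta(X)$ is the clique cover number: the minimum number of cliques partitioning $V(X)$. A set $M\subseteq V(G)$ is a $2$-distance mutual-visibility set if for every two vertices $u,v\in M$ there exists a shortest $u,v$-path of length at most $2$ none of whose internal vertices lies in $M$; it is an independent $2$-distance mutual-visibility (I2DMV) set if moreover it is independent. $\chi_{i\mu_2}(G)$ is the minimum cardinality of a partition of $V(G)$ into I2DMV sets. $\gamma_t(G)$ is the total domination number: minimum size of a set $D$ such that every vertex of $G$ has a neighbor in $D$. *)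

theory Defs
  imports Main "HOL-Library.Extended_Nat"
begin

definition graph :: "'a set \<Rightarrow> ('a \<Rightarrow> 'a \<Rightarrow> bool) \<Rightarrow> bool" where
  "graph V E \<longleftrightarrow> finite V \<and> (\<forall>u v. E u v \<longrightarrow> u \<in> V \<and> v \<in> V \<and> u \<noteq> v \<and> E v u)"

text \<open>Walks as nonempty vertex lists; a walk with list xs has length (length xs - 1).\<close>
definition walk :: "'a set \<Rightarrow> ('a \<Rightarrow> 'a \<Rightarrow> bool) \<Rightarrow> 'a list \<Rightarrow> bool" where
  "walk V E xs \<longleftrightarrow> xs \<noteq> [] \<and> set xs \<subseteq> V \<and> (\<forall>i. Suc i < length xs \<longrightarrow> E (xs ! i) (xs ! Suc i))"

definition walk_between :: "'a set \<Rightarrow> ('a \<Rightarrow> 'a \<Rightarrow> bool) \<Rightarrow> 'a \<Rightarrow> 'a \<Rightarrow> 'a list \<Rightarrow> bool" where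
  "walk_between V E u v xs \<longleftrightarrow> walk V E xs \<and> hd xs = u \<and> last xs = v"

definition has_dist :: "'a set \<Rightarrow> ('a \<Rightarrow> 'a \<Rightarrow> bool) \<Rightarrow> 'a \<Rightarrow> 'a \<Rightarrow> nat \<Rightarrow> bool" where
  "has_dist V E u v n \<longleftrightarrow>
     (\<exists>xs. walk_between V E u v xs \<and> length xs = Suc n) \<and>
     (\<forall>xs. walk_between V E u v xs \<longrightarrow> Suc n \<le> length xs)"

definition is_cycle :: "'a set \<Rightarrow> ('a \<Rightarrow> 'a \<Rightarrow> bool) \<Rightarrow> 'a list \<Rightarrow> bool" where
  "is_cycle V E xs \<longleftrightarrow> length xs \<ge> 3 \<and> distinct xs \<and> walk V E xs \<and> E (last xs) (hd xs)"

text \<open>Girth: length of a shortest cycle, infinite (\<infinity>) for forests.\<close>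
definition girth :: "'a set \<Rightarrow> ('a \<Rightarrow> 'a \<Rightarrow> bool) \<Rightarrow> enat" where
  "girth V E = (INF xs \<in> {xs. is_cycle V E xs}. enat (length xs))"

definition exact_dist2 :: "'a set \<Rightarrow> ('a \<Rightarrow> 'a \<Rightarrow> bool) \<Rightarrow> 'a \<Rightarrow> 'a \<Rightarrow> bool" where
  "exact_dist2 V E u v \<longleftrightarrow> has_dist V E u v 2"

definition is_partition :: "'a set \<Rightarrow> 'a set set \<Rightarrow> bool" where
  "is_partition V P \<longleftrightarrow> (\<forall>A\<in>P. A \<noteq> {} \<and> A \<subseteq> V) \<and> \<Union>P = V \<and> pairwise disjnt P"

definition clique :: "'a set \<Rightarrow> ('a \<Rightarrow> 'a \<Rightarrow> bool) \<Rightarrow> 'a set \<Rightarrow> bool" where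
  "clique V E A \<longleftrightarrow> A \<subseteq> V \<and> (\<forall>u\<in>A. \<forall>v\<in>A. u \<noteq> v \<longrightarrow> E u v)"

definition clique_cover_number :: "'a set \<Rightarrow> ('a \<Rightarrow> 'a \<Rightarrow> bool) \<Rightarrow> nat" where
  "clique_cover_number V E = (LEAST k. \<exists>P. is_partition V P \<and> card P = k \<and> (\<forall>A\<in>P. clique V E A))"

definition dmv2 :: "'a set \<Rightarrow> ('a \<Rightarrow> 'a \<Rightarrow> bool) \<Rightarrow> 'a set \<Rightarrow> bool" where
  "dmv2 V E M \<longleftrightarrow> M \<subseteq> V \<and> (\<forall>u\<in>M. \<forall>v\<in>M. u \<noteq> v \<longrightarrow>
     (\<exists>xs n. has_dist V E u v n \<and> n \<le> 2 \<and> walk_between V E u v xs \<and> length xs = Suc n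
             \<and> set (butlast (tl xs)) \<inter> M = {}))"

definition independent :: "'a set \<Rightarrow> ('a \<Rightarrow> 'a \<Rightarrow> bool) \<Rightarrow> 'a set \<Rightarrow> bool" where
  "independent V E M \<longleftrightarrow> M \<subseteq> V \<and> (\<forall>u\<in>M. \<forall>v\<in>M. \<not> E u v)"

definition i2dmv :: "'a set \<Rightarrow> ('a \<Rightarrow> 'a \<Rightarrow> bool) \<Rightarrow> 'a set \<Rightarrow> bool" where
  "i2dmv V E M \<longleftrightarrow> dmv2 V E M \<and> independent V E M"

definition chi_imu2 :: "'a set \<Rightarrow> ('a \<Rightarrow> 'a \<Rightarrow> bool) \<Rightarrow> nat" where
  "chi_imu2 V E = (LEAST k. \<exists>P. is_partition V P \<and> card P = k \<and> (\<forall>A\<in>P. i2dmv V E A))"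

definition total_dom_number :: "'a set \<Rightarrow> ('a \<Rightarrow> 'a \<Rightarrow> bool) \<Rightarrow> nat" where
  "total_dom_number V E = (LEAST k. \<exists>D. D \<subseteq> V \<and> card D = k \<and> (\<forall>v\<in>V. \<exists>d\<in>D. E v d))"

end

theory Submission
  imports Defs
begin

lemma gE:
  assumes "graph V E" "E u v"
  shows "u \<in> V" "v \<in> V" "u \<noteq> v" "E v u"
  using assms unfolding graph_def by blast+

lemma cyc7:
  assumes "girth V E \<ge> 7" "is_cycle V E xs"
  shows "7 \<le> length xs"
proof -
  have "girth V E \<le> enat (length xs)" unfolding girth_def
    by (rule INF_lower) (use assms in simp)
  with assms(1) have "(7::enat) \<le> enat (length xs)" by (rule order_trans)
  then show ?thesis by (simp add: numeral_eq_enat)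
qed

lemma no_tri:
  assumes g: "graph V E" and gi: "girth V E \<ge> 7"
    and "E a b" "E b c" "E c a"
  shows False
proof -
  have d: "a \<noteq> b" "b \<noteq> c" "c \<noteq> a" "a \<in> V" "b \<in> V" "c \<in> V"
    using assms g unfolding graph_def by blast+
  have "is_cycle V E [a,b,c]"
    using d assms unfolding is_cycle_def walk_def
    by (auto simp: less_Suc_eq nth_Cons split: nat.splits)
  from cyc7[OF gi this] show False by simp
qed

lemma no_c4:
  assumes g: "graph V E" and gi: "girth V E \<ge> 7"
    and "E a b" "E b c" "E c d" "E d a" "a \<noteq> c" "b \<noteq> d"
  shows False
proof -
  have d: "a \<noteq> b" "b \<noteq> c" "c \<noteq> d" "d \<noteq> a" "a \<in> V" "b \<in> V" "c \<in> V" "d \<in> V"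
    using assms g unfolding graph_def by blast+
  have "is_cycle V E [a,b,c,d]"
    using d assms unfolding is_cycle_def walk_def
    by (auto simp: less_Suc_eq nth_Cons split: nat.splits)
  from cyc7[OF gi this] show False by simp
qed

lemma no_c6:
  assumes g: "graph V E" and gi: "girth V E \<ge> 7"
    and "E a b" "E b c" "E c d" "E d e" "E e f" "E f a" "distinct [a,b,c,d,e,f]"
  shows False
proof -
  have d: "a \<in> V" "b \<in> V" "c \<in> V" "d \<in> V" "e \<in> V" "f \<in> V"
    using assms g unfolding graph_def by blast+
  have "is_cycle V E [a,b,c,d,e,f]"
    using d assms unfolding is_cycle_def walk_def
    by (auto simp: less_Suc_eq nth_Cons split: nat.splits)
  from cyc7[OF gi this] show False by simp
qed

lemma walk_len1:
  assumes "walk_between V E u v xs" "length xs = Suc 0"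
  shows "u = v"
  using assms unfolding walk_between_def
  by (cases xs) auto

lemma walk_len2:
  assumes "walk_between V E u v xs" "length xs = Suc (Suc 0)"
  shows "E u v"
proof -
  obtain a b where xs: "xs = [a,b]" using assms(2)
    by (auto simp: length_Suc_conv)
  then show ?thesis using assms(1) unfolding walk_between_def walk_def
    by (auto dest: spec[of _ 0])
qed

lemma walk_len3:
  assumes "walk_between V E u v xs" "length xs = Suc (Suc (Suc 0))"
  shows "\<exists>w. xs = [u,w,v] \<and> E u w \<and> E w v"
proof -
  obtain a b c where xs: "xs = [a,b,c]" using assms(2)
    by (auto simp: length_Suc_conv)
  then show ?thesis using assms(1) unfolding walk_between_def walk_def
    by (auto dest: spec[of _ 0] spec[of _ 1])
qed

lemma d2_iff:
  assumes g: "graph V E"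
  shows "exact_dist2 V E u v \<longleftrightarrow> u \<noteq> v \<and> \<not> E u v \<and> (\<exists>w. E u w \<and> E w v)"
proof
  assume "exact_dist2 V E u v"
  then have h: "has_dist V E u v 2" by (simp add: exact_dist2_def)
  then obtain xs where xs: "walk_between V E u v xs" "length xs = Suc 2"
    unfolding has_dist_def by blast
  from walk_len3[OF xs(1)] xs(2) obtain w where w: "E u w" "E w v" by auto
  have uV: "u \<in> V" "v \<in> V" using w g unfolding graph_def by blast+
  have "u \<noteq> v"
  proof
    assume "u = v"
    then have "walk_between V E u v [u]" using uV
      by (simp add: walk_between_def walk_def)
    with h show False unfolding has_dist_def by fastforce
  qed
  moreover have "\<not> E u v"
  proof
    assume "E u v"
    then have "walk_between V E u v [u,v]" using uV
      by (auto simp: walk_between_def walk_def less_Suc_eq)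
    with h show False unfolding has_dist_def by fastforce
  qed
  ultimately show "u \<noteq> v \<and> \<not> E u v \<and> (\<exists>w. E u w \<and> E w v)" using w by blast
next
  assume a: "u \<noteq> v \<and> \<not> E u v \<and> (\<exists>w. E u w \<and> E w v)"
  then obtain w where w: "E u w" "E w v" by blast
  have V: "u \<in> V" "v \<in> V" "w \<in> V" using w g unfolding graph_def by blast+
  have "walk_between V E u v [u,w,v]" using w V
    by (auto simp: walk_between_def walk_def less_Suc_eq nth_Cons split: nat.splits)
  moreover have "Suc 2 \<le> length xs" if "walk_between V E u v xs" for xs
  proof (rule ccontr)
    assume "\<not> Suc 2 \<le> length xs"
    moreover have "xs \<noteq> []" using that by (simp add: walk_between_def walk_def)
    ultimately have "length xs = Suc 0 \<or> length xs = Suc (Suc 0)"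
      by (cases xs) (auto simp: numeral_2_eq_2 le_Suc_eq not_le less_Suc_eq)
    then show False using walk_len1[OF that] walk_len2[OF that] a by auto
  qed
  ultimately show "exact_dist2 V E u v"
    unfolding exact_dist2_def has_dist_def by (metis length_Cons list.size(3) numeral_2_eq_2)
qed


lemma has_dist_cases:
  assumes "has_dist V E u v n" "n \<le> 2" "u \<noteq> v" "\<not> E u v"
  shows "n = 2"
proof -
  obtain xs where xs: "walk_between V E u v xs" "length xs = Suc n"
    using assms(1) unfolding has_dist_def by blast
  have "n = 0 \<or> n = 1 \<or> n = 2" using assms(2) by auto
  then show ?thesis using walk_len1[OF xs(1)] walk_len2[OF xs(1)] xs(2) assms by auto
qed

lemma i2dmv_iff:
  assumes g: "graph V E"
  shows "i2dmv V E A \<longleftrightarrow> clique V (exact_dist2 V E) A"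
proof
  assume a: "i2dmv V E A"
  then have sub: "A \<subseteq> V" and ind: "\<forall>u\<in>A. \<forall>v\<in>A. \<not> E u v"
    unfolding i2dmv_def independent_def by blast+
  have "exact_dist2 V E u v" if uv: "u \<in> A" "v \<in> A" "u \<noteq> v" for u v
  proof -
    obtain n where hn: "has_dist V E u v n" "n \<le> 2"
      using a uv unfolding i2dmv_def dmv2_def by meson
    have nE: "\<not> E u v" using ind uv by blast
    have "n = 2" using has_dist_cases[OF hn(1) hn(2) uv(3) nE] .
    with hn(1) show ?thesis by (simp add: exact_dist2_def)
  qed
  with sub show "clique V (exact_dist2 V E) A" by (simp add: clique_def)
next
  assume c: "clique V (exact_dist2 V E) A"
  then have sub: "A \<subseteq> V" by (simp add: clique_def)
  have ind: "\<not> E u v" if "u \<in> A" "v \<in> A" for u v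
  proof (cases "u = v")
    case True then show ?thesis using gE(3)[OF g] by blast
  next
    case False then show ?thesis using c that unfolding clique_def d2_iff[OF g] by blast
  qed
  have "\<exists>xs n. has_dist V E u v n \<and> n \<le> 2 \<and> walk_between V E u v xs \<and> length xs = Suc n
             \<and> set (butlast (tl xs)) \<inter> A = {}" if "u \<in> A" "v \<in> A" "u \<noteq> v" for u v
  proof -
    have h: "has_dist V E u v 2" using c that unfolding clique_def exact_dist2_def by blast
    then obtain xs where xs: "walk_between V E u v xs" "length xs = Suc 2"
      unfolding has_dist_def by blast
    from walk_len3[OF xs(1)] xs(2) obtain w where w: "xs = [u,w,v]" "E u w" by auto
    have "w \<notin> A" using ind[OF that(1)] w by blast
    then have "set (butlast (tl xs)) \<inter> A = {}" using w by simp
    with h xs show ?thesis by blast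
  qed
  then show "i2dmv V E A" using sub ind
    unfolding i2dmv_def dmv2_def independent_def by blast
qed

lemma nbr_clique:
  assumes g: "graph V E" and gi: "girth V E \<ge> 7"
    and "E u d" "E v d" "u \<noteq> v"
  shows "exact_dist2 V E u v"
proof -
  have "\<not> E u v"
  proof
    assume "E u v"
    moreover have "E d u" using gE(4)[OF g assms(3)] .
    ultimately show False using no_tri[OF g gi \<open>E u v\<close> assms(4)] by blast
  qed
  then show ?thesis unfolding d2_iff[OF g] using assms gE(4)[OF g assms(4)] by blast
qed

lemma clique_nbr:
  assumes g: "graph V E" and gi: "girth V E \<ge> 7" and ni: "\<forall>v\<in>V. \<exists>u. E v u"
    and c: "clique V (exact_dist2 V E) A" and ne: "A \<noteq> {}"
  shows "\<exists>x\<in>V. \<forall>a\<in>A. E a x"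
proof (cases "\<exists>a b. a \<in> A \<and> b \<in> A \<and> a \<noteq> b")
  case False
  then obtain a where "A = {a}" using ne by blast
  moreover have "a \<in> V" using c \<open>A = {a}\<close> by (auto simp: clique_def)
  ultimately obtain x where "E a x" using ni by blast
  then show ?thesis using gE(2)[OF g] \<open>A = {a}\<close> by blast
next
  case True
  then obtain a b where ab: "a \<in> A" "b \<in> A" "a \<noteq> b" by blast
  have sym: "E p q \<Longrightarrow> E q p" for p q using gE(4)[OF g] by blast
  have irr: "E p q \<Longrightarrow> p \<noteq> q" for p q using gE(3)[OF g] by blast
  have D: "p \<in> A \<Longrightarrow> q \<in> A \<Longrightarrow> p \<noteq> q \<Longrightarrow> \<not> E p q \<and> (\<exists>w. E p w \<and> E w q)" for p q
    using c unfolding clique_def d2_iff[OF g] by blast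
  obtain x where x: "E a x" "E x b" using D ab by blast
  have xV: "x \<in> V" using gE(2)[OF g x(1)] .
  have "E c x" if cA: "c \<in> A" for c
  proof -
    consider "c = a" | "c = b" | "c \<noteq> a" "c \<noteq> b" by blast
    then show ?thesis
    proof cases
      case 1 then show ?thesis using x by simp
    next
      case 2 then show ?thesis using x sym by simp
    next
      case 3
      obtain y where y: "E b y" "E y c" using D[OF ab(2) cA] 3 by metis
      obtain z where z: "E c z" "E z a" using D[OF cA ab(1)] 3 by metis
      have nab: "\<not> E a b" "\<not> E b c" "\<not> E c a" using D ab cA 3 by blast+
      show ?thesis
      proof (rule ccontr)
        assume nx: "\<not> E c x"
        have yx: "y \<noteq> x" using y nx sym by blast
        have zx: "z \<noteq> x" using z nx by blast
        show False
        proof (cases "y = z")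
          case True
          show False using no_c4[OF g gi x(1) x(2) y(1)] True z yx ab(3) by metis
        next
          case False
          have xc: "x \<noteq> c" using x(1) nab(3) sym by blast
          have ya: "y \<noteq> a" using y(1) nab(1) sym by blast
          have zb: "z \<noteq> b" using z(2) nab(1) sym by blast
          have "distinct [a,x,b,y,c,z]"
            using ab(3) 3 yx zx False irr[OF x(1)] irr[OF x(2)] irr[OF y(1)] irr[OF y(2)] irr[OF z(1)] irr[OF z(2)] xc ya zb
            by auto
          then show False using no_c6[OF g gi x(1) x(2) y(1) y(2) z(1) z(2)] by blast
        qed
      qed
    qed
  qed
  then show ?thesis using xV by blast
qed


theorem theorem3p6:
  fixes V :: "'a set" and E :: "'a \<Rightarrow> 'a \<Rightarrow> bool"
  assumes "graph V E"
    and "girth V E \<ge> 7"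
    and "\<forall>v\<in>V. \<exists>u. E v u"
  shows "clique_cover_number V (exact_dist2 V E) = chi_imu2 V E
       \<and> chi_imu2 V E = total_dom_number V E"
proof -
  note g = assms(1) and gi = assms(2) and ni = assms(3)
  have finV: "finite V" using g by (simp add: graph_def)
  have eq1: "clique_cover_number V (exact_dist2 V E) = chi_imu2 V E"
    unfolding clique_cover_number_def chi_imu2_def by (simp add: i2dmv_iff[OF g])
  define t where "t = total_dom_number V E"
  have exV: "\<exists>D. D \<subseteq> V \<and> card D = card V \<and> (\<forall>v\<in>V. \<exists>d\<in>D. E v d)"
  proof (intro exI conjI)
    show "\<forall>v\<in>V. \<exists>d\<in>V. E v d" using ni g unfolding graph_def by metis
  qed auto
  have "\<exists>D. D \<subseteq> V \<and> card D = t \<and> (\<forall>v\<in>V. \<exists>d\<in>D. E v d)"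
    unfolding t_def total_dom_number_def by (rule LeastI_ex) (use exV in blast)
  then obtain D where D: "D \<subseteq> V" "card D = t" "\<forall>v\<in>V. \<exists>d\<in>D. E v d" by blast
  define f where "f v = (SOME d. d \<in> D \<and> E v d)" for v
  have f: "f v \<in> D \<and> E v (f v)" if "v \<in> V" for v
    unfolding f_def using D(3) that by (metis (mono_tags, lifting) someI_ex)
  define P where "P = (\<lambda>d. {v\<in>V. f v = d}) ` (f ` V)"
  have partP: "is_partition V P"
    unfolding is_partition_def
  proof (intro conjI ballI)
    fix A assume "A \<in> P"
    then obtain v where v: "v \<in> V" "A = {w\<in>V. f w = f v}" unfolding P_def by blast
    then show "A \<noteq> {}" "A \<subseteq> V" by blast+
  next
    show "\<Union>P = V"
    proof
      show "\<Union>P \<subseteq> V" unfolding P_def by blast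
      show "V \<subseteq> \<Union>P"
      proof
        fix v assume "v \<in> V"
        then have "v \<in> {w\<in>V. f w = f v}" "{w\<in>V. f w = f v} \<in> P" unfolding P_def by blast+
        then show "v \<in> \<Union>P" by blast
      qed
    qed
  next
    show "pairwise disjnt P"
    proof (rule pairwiseI)
      fix A B assume "A \<in> P" "B \<in> P" "A \<noteq> B"
      then obtain a b where "A = {w\<in>V. f w = a}" "B = {w\<in>V. f w = b}" unfolding P_def by blast
      with \<open>A \<noteq> B\<close> show "disjnt A B" unfolding disjnt_def by auto
    qed
  qed
  have cardP: "card P \<le> t"
  proof -
    have "card P \<le> card (f ` V)" unfolding P_def by (rule card_image_le) (use finV in simp)
    also have "\<dots> \<le> card D" by (rule card_mono) (use D f finite_subset finV in auto)
    finally show ?thesis using D(2) by simp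
  qed
  have cliqP: "\<forall>A\<in>P. clique V (exact_dist2 V E) A"
  proof
    fix A assume "A \<in> P"
    then obtain d where A: "A = {w\<in>V. f w = d}" unfolding P_def by blast
    have "exact_dist2 V E u v" if "u \<in> A" "v \<in> A" "u \<noteq> v" for u v
    proof -
      have uv: "u \<in> V" "v \<in> V" "f u = d" "f v = d" using that A by auto
      have "E u d" "E v d" using f[OF uv(1)] f[OF uv(2)] uv(3,4) by auto
      then show ?thesis using nbr_clique[OF g gi] that(3) by blast
    qed
    then show "clique V (exact_dist2 V E) A" unfolding clique_def using A by blast
  qed
  define th where "th = clique_cover_number V (exact_dist2 V E)"
  have ex: "\<exists>P. is_partition V P \<and> card P = card P \<and> (\<forall>A\<in>P. clique V (exact_dist2 V E) A)"
    using partP cliqP by blast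
  have le1: "th \<le> card P" unfolding th_def clique_cover_number_def
    by (rule Least_le) (use partP cliqP in blast)
  have "\<exists>Q. is_partition V Q \<and> card Q = th \<and> (\<forall>A\<in>Q. clique V (exact_dist2 V E) A)"
    unfolding th_def clique_cover_number_def by (rule LeastI_ex) (use ex in blast)
  then obtain Q where Q: "is_partition V Q" "card Q = th" "\<forall>A\<in>Q. clique V (exact_dist2 V E) A"
    by blast
  have "\<exists>x\<in>V. \<forall>a\<in>A. E a x" if "A \<in> Q" for A
    using clique_nbr[OF g gi ni] Q(1,3) that by (auto simp: is_partition_def)
  then obtain h where h: "\<And>A. A \<in> Q \<Longrightarrow> h A \<in> V \<and> (\<forall>a\<in>A. E a (h A))" by metis
  have finQ: "finite Q" using Q(1) finV by (metis finite_UnionD is_partition_def)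
  have "t \<le> card (h ` Q)" unfolding t_def total_dom_number_def
  proof (rule Least_le)
    show "\<exists>D'. D' \<subseteq> V \<and> card D' = card (h ` Q) \<and> (\<forall>v\<in>V. \<exists>d\<in>D'. E v d)"
    proof (intro exI conjI)
      show "h ` Q \<subseteq> V" using h by auto
      show "\<forall>v\<in>V. \<exists>d\<in>h ` Q. E v d"
      proof
        fix v assume "v \<in> V"
        then obtain A where "A \<in> Q" "v \<in> A" using Q(1) by (auto simp: is_partition_def)
        then show "\<exists>d\<in>h ` Q. E v d" using h by blast
      qed
    qed simp
  qed
  also have "\<dots> \<le> card Q" using finQ by (rule card_image_le)
  finally have "t \<le> th" using Q(2) by simp
  with le1 cardP have "th = t" by simp
  with eq1 show ?thesis unfolding th_def t_def by simp
qed

end
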